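(* Suppose that the Colour alignment problem always has a solution (for all positive integers $m,n$ and every initial distribution of balls). Then every finite $0$-rectangular band that has a permutation matching has an involution matching.
   Context: Colour alignment problem: there are $m$ girls and $mn$ (distinct) balls, each girl holding $n$ balls, and there are exactly $m$ balls of each of $n$ colours. An exchange consists of two girls swapping one ball each (one ball for one ball, so each girl still holds $n$ balls); no ball may participate in more than one exchange. A solution is a set of such exchanges after which each girl holds balls of all $n$ colours (hence exactly one ball of each colour). A finite $0$-rectangular band with $m$ rows and $n$ columns: $S=(R\times C)\cup\{0\}$ with $R=\{1,\dots,m\}$, $C=\{1,\dots,n\}$, and a set $E\subseteq R\times C$ meeting every row and every column; multiplication is $(i,j)(k,l)=(i,l)$ if $(k,j)\in E$ and $0$ otherwise, with $0$ a zero element. For $x\in S$, $V(x)=\{y\in S: xyx=x,\ yxy=y\}$. A permutation matching of $S$ is a bijection $\phi:S\to S$ with $\phi(x)\in V(x)$ for all $x$; an involution matching is a permutation matching $\phi$ with $\phi\circ\phi=\mathrm{id}_S$. *)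

theory Defs
  imports Main
begin

text \<open>Balls are the numbers 0,...,m*n-1. hold b is the girl (in 0..m-1) holding ball b,
  col b is its colour (in 0..n-1).\<close>

definition valid_distribution :: "nat \<Rightarrow> nat \<Rightarrow> (nat \<Rightarrow> nat) \<Rightarrow> (nat \<Rightarrow> nat) \<Rightarrow> bool" where
  "valid_distribution m n hold col \<longleftrightarrow>
     (\<forall>b < m * n. hold b < m \<and> col b < n) \<and>
     (\<forall>g < m. card {b. b < m * n \<and> hold b = g} = n) \<and>
     (\<forall>c < n. card {b. b < m * n \<and> col b = c} = m)"

definition admissible_exchanges :: "nat \<Rightarrow> nat \<Rightarrow> (nat \<Rightarrow> nat) \<Rightarrow> nat set set \<Rightarrow> bool" where
  "admissible_exchanges m n hold X \<longleftrightarrow>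
     (\<forall>e \<in> X. \<exists>a b. e = {a, b} \<and> a < m * n \<and> b < m * n \<and> hold a \<noteq> hold b) \<and>
     (\<forall>e \<in> X. \<forall>e' \<in> X. e \<noteq> e' \<longrightarrow> e \<inter> e' = {})"

definition new_holder :: "(nat \<Rightarrow> nat) \<Rightarrow> nat set set \<Rightarrow> nat \<Rightarrow> nat" where
  "new_holder hold X b =
     (if \<exists>e \<in> X. b \<in> e then hold (THE b'. {b, b'} \<in> X) else hold b)"

definition colour_alignment_solvable :: "nat \<Rightarrow> nat \<Rightarrow> (nat \<Rightarrow> nat) \<Rightarrow> (nat \<Rightarrow> nat) \<Rightarrow> bool" where
  "colour_alignment_solvable m n hold col \<longleftrightarrow>
     (\<exists>X. admissible_exchanges m n hold X \<and>
          (\<forall>g < m. \<forall>c < n. \<exists>b < m * n. new_holder hold X b = g \<and> col b = c))"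

definition colour_alignment_always_solvable :: bool where
  "colour_alignment_always_solvable \<longleftrightarrow>
     (\<forall>m n hold col. 0 < m \<longrightarrow> 0 < n \<longrightarrow> valid_distribution m n hold col \<longrightarrow>
        colour_alignment_solvable m n hold col)"

text \<open>Elements: None is the zero, Some (i,j) the element (i,j) of R x C.\<close>

definition rb_carrier :: "nat \<Rightarrow> nat \<Rightarrow> (nat \<times> nat) option set" where
  "rb_carrier m n = insert None (Some ` ({1..m} \<times> {1..n}))"

definition rb_valid :: "nat \<Rightarrow> nat \<Rightarrow> (nat \<times> nat) set \<Rightarrow> bool" where
  "rb_valid m n E \<longleftrightarrow> E \<subseteq> {1..m} \<times> {1..n} \<and>
     (\<forall>i \<in> {1..m}. \<exists>j. (i, j) \<in> E) \<and> (\<forall>j \<in> {1..n}. \<exists>i. (i, j) \<in> E)"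

fun rb_mult :: "(nat \<times> nat) set \<Rightarrow> (nat \<times> nat) option \<Rightarrow> (nat \<times> nat) option \<Rightarrow> (nat \<times> nat) option" where
  "rb_mult E (Some (i, j)) (Some (k, l)) = (if (k, j) \<in> E then Some (i, l) else None)"
| "rb_mult E _ _ = None"

definition rb_inverses :: "nat \<Rightarrow> nat \<Rightarrow> (nat \<times> nat) set \<Rightarrow> (nat \<times> nat) option \<Rightarrow> (nat \<times> nat) option set" where
  "rb_inverses m n E x = {y \<in> rb_carrier m n.
      rb_mult E (rb_mult E x y) x = x \<and> rb_mult E (rb_mult E y x) y = y}"

definition permutation_matching :: "nat \<Rightarrow> nat \<Rightarrow> (nat \<times> nat) set \<Rightarrow> ((nat \<times> nat) option \<Rightarrow> (nat \<times> nat) option) \<Rightarrow> bool" where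
  "permutation_matching m n E \<phi> \<longleftrightarrow>
     bij_betw \<phi> (rb_carrier m n) (rb_carrier m n) \<and>
     (\<forall>x \<in> rb_carrier m n. \<phi> x \<in> rb_inverses m n E x)"

definition involution_matching :: "nat \<Rightarrow> nat \<Rightarrow> (nat \<times> nat) set \<Rightarrow> ((nat \<times> nat) option \<Rightarrow> (nat \<times> nat) option) \<Rightarrow> bool" where
  "involution_matching m n E \<phi> \<longleftrightarrow>
     permutation_matching m n E \<phi> \<and> (\<forall>x \<in> rb_carrier m n. \<phi> (\<phi> x) = x)"

end

theory Submission
  imports Defs
begin

lemma inv_some:
  "y \<in> rb_inverses m n E (Some (i,j)) \<longleftrightarrow>
   (\<exists>k l. y = Some (k,l) \<and> k \<in> {1..m} \<and> l \<in> {1..n} \<and> (k,j) \<in> E \<and> (i,l) \<in> E)"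
  unfolding rb_inverses_def rb_carrier_def
  by (cases y) (auto split: if_splits)

lemma inv_none: "rb_inverses m n E None = {None}"
proof -
  have "rb_mult E (rb_mult E y None) y = None" for y
    by (cases y) auto
  then show ?thesis unfolding rb_inverses_def rb_carrier_def by auto
qed

lemma partner:
  assumes disj: "\<forall>e\<in>X. \<forall>e'\<in>X. e \<noteq> e' \<longrightarrow> e \<inter> e' = {}"
    and eX: "{a,c} \<in> X" and x: "x \<in> {a,c}"
  shows "(THE y. {x,y} \<in> X) = (if x = a then c else a)"
proof (rule the_equality)
  show "{x, if x = a then c else a} \<in> X" using eX x by (auto simp: insert_commute)
next
  fix y assume y: "{x,y} \<in> X"
  have "x \<in> {x,y} \<inter> {a,c}" using x by simp
  then have "{x,y} \<inter> {a,c} \<noteq> {}" by blast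
  then have "{x,y} = {a,c}" using disj y eX by metis
  then have "(x = a \<and> y = c) \<or> (x = c \<and> y = a)" by (simp add: doubleton_eq_iff)
  then show "y = (if x = a then c else a)" by auto
qed

lemma s_props:
  fixes X :: "nat set set"
  assumes disj: "\<forall>e\<in>X. \<forall>e'\<in>X. e \<noteq> e' \<longrightarrow> e \<inter> e' = {}"
    and shape: "\<forall>e \<in> X. \<exists>a c. e = {a, c} \<and> a < N \<and> c < N"
    and s_def: "\<And>b. s b = (if \<exists>e\<in>X. b\<in>e then THE b'. {b,b'}\<in>X else b)"
    and b: "b < N"
  shows "s b < N \<and> s (s b) = b"
proof (cases "\<exists>e\<in>X. b\<in>e")
  case True
  then obtain e where e: "e \<in> X" "b \<in> e" by blast
  then obtain a c where ac: "e = {a,c}" "a < N" "c < N" using shape by blast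
  have sb0: "s b = (THE y. {b,y} \<in> X)" by (subst s_def[of b], rule if_P[OF True])
  have acX: "{a,c} \<in> X" "b \<in> {a,c}" using e ac by auto
  have sb: "s b = (if b = a then c else a)"
    unfolding sb0 by (rule partner[OF disj acX])
  have sbe: "s b \<in> {a,c}" unfolding sb by simp
  have ex2: "\<exists>e\<in>X. s b \<in> e" using sbe acX(1) by (intro bexI[where x="{a,c}"])
  have ssb0: "s (s b) = (THE y. {s b,y} \<in> X)" by (subst s_def[of "s b"], rule if_P[OF ex2])
  have ssb: "s (s b) = (if s b = a then c else a)"
    unfolding ssb0 by (rule partner[OF disj acX(1) sbe])
  have "s (s b) = b"
  proof (cases "b = a")
    case True then show ?thesis using ssb sb by simp
  next
    case False then have "b = c" using acX by auto
    then show ?thesis using ssb sb False by simp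
  qed
  moreover have "s b < N" using sb ac by auto
  ultimately show ?thesis by simp
next
  case False
  then show ?thesis using b by (simp add: s_def)
qed

lemma main:
  assumes CA: colour_alignment_always_solvable and m: "0<m" and n: "0<n"
    and pm: "permutation_matching m n E \<phi>"
  shows "\<exists>\<psi>. involution_matching m n E \<psi>"
proof -
  define G where "G = Some ` ({1..m}\<times>{1..n})"
  have carr: "rb_carrier m n = insert None G" by (simp add: rb_carrier_def G_def)
  have phi_bij: "bij_betw \<phi> (rb_carrier m n) (rb_carrier m n)"
    and phi_inv: "\<forall>x\<in>rb_carrier m n. \<phi> x \<in> rb_inverses m n E x"
    using pm by (auto simp: permutation_matching_def)
  have phiS: "\<exists>k l. \<phi> (Some(i,j)) = Some(k,l) \<and> k\<in>{1..m} \<and> l\<in>{1..n} \<and> (k,j)\<in>E \<and> (i,l)\<in>E"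
    if "i\<in>{1..m}" "j\<in>{1..n}" for i j
  proof -
    have "Some (i,j) \<in> rb_carrier m n" using that by (simp add: rb_carrier_def)
    then have "\<phi> (Some (i,j)) \<in> rb_inverses m n E (Some (i,j))" using phi_inv by blast
    then show ?thesis using inv_some by blast
  qed
  have phiN: "\<phi> None = None"
    using phi_inv inv_none[of m n E] by (auto simp: rb_carrier_def)
  define cell where "cell b = (b div n + 1, b mod n + 1)" for b::nat
  define hold where "hold b = b div n" for b::nat
  define col where "col b = snd (the (\<phi> (Some (cell b)))) - 1" for b
  have cell_in: "cell b \<in> {1..m}\<times>{1..n}" if "b < m*n" for b
  proof -
    have "b div n < m" using that by (simp add: less_mult_imp_div_less)
    moreover have "b mod n < n" using n by simp
    ultimately show ?thesis by (auto simp: cell_def)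
  qed
  have cell_inj: "inj_on cell {..<m*n}"
  proof (rule inj_onI)
    fix a b assume "cell a = cell b"
    then have "a div n = b div n" "a mod n = b mod n" by (auto simp: cell_def)
    then show "a = b" by (metis div_mult_mod_eq)
  qed
  have cell_surj: "\<exists>b<m*n. cell b = (i,j)" if "i\<in>{1..m}" "j\<in>{1..n}" for i j
  proof -
    define b where "b = (i-1)*n + (j-1)"
    have j1: "j - 1 < n" using that by auto
    have "b div n = i - 1" unfolding b_def using j1 n by simp
    moreover have "b mod n = j - 1" unfolding b_def using j1 by simp
    moreover have "b < m*n"
    proof -
      have "b < (i-1)*n + n" unfolding b_def using j1 by simp
      also have "\<dots> = i*n" using that by (cases i) auto
      also have "\<dots> \<le> m*n" using that by simp
      finally show ?thesis .
    qed
    ultimately show ?thesis using that by (intro exI[of _ b]) (auto simp: cell_def)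
  qed
  have colE: "col b < n \<and> (hold b + 1, col b + 1) \<in> E \<and>
     (\<exists>k. \<phi> (Some (cell b)) = Some (k, col b + 1) \<and> k \<in> {1..m})" if bb: "b < m*n" for b
  proof -
    obtain i j where ij: "cell b = (i,j)" "i\<in>{1..m}" "j\<in>{1..n}" using cell_in[OF bb] by auto
    have hi: "i = hold b + 1" using ij(1) by (simp add: cell_def hold_def)
    obtain k l where kl: "\<phi> (Some(i,j)) = Some(k,l)" "k\<in>{1..m}" "l\<in>{1..n}" "(i,l)\<in>E"
      using phiS[OF ij(2,3)] by blast
    have "col b = l - 1" unfolding col_def using ij(1) kl(1) by simp
    then have "col b + 1 = l" using kl(3) by simp
    then show ?thesis using kl hi ij(1) by auto
  qed
  have valid: "valid_distribution m n hold col"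
    unfolding valid_distribution_def
  proof (intro conjI allI impI)
    fix b assume "b < m*n"
    then show "hold b < m" by (simp add: hold_def less_mult_imp_div_less)
  next
    fix b assume "b < m*n"
    then show "col b < n" using colE by blast
  next
    fix g assume g: "g < m"
    have "{b. b < m*n \<and> hold b = g} = {g*n..<g*n+n}"
    proof (intro set_eqI iffI)
      fix b assume "b \<in> {b. b < m*n \<and> hold b = g}"
      then have "b div n = g" by (simp add: hold_def)
      moreover have "b = b div n * n + b mod n" by simp
      moreover have "b mod n < n" using n by simp
      ultimately show "b \<in> {g*n..<g*n+n}" by auto
    next
      fix b assume b: "b \<in> {g*n..<g*n+n}"
      then have "b div n = g" using n by (auto simp: div_nat_eqI mult.commute)
      moreover have "g*n+n \<le> m*n" using g by (metis Suc_leI add.commute mult_Suc mult_le_mono1)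
      ultimately show "b \<in> {b. b < m*n \<and> hold b = g}" using b by (auto simp: hold_def)
    qed
    then show "card {b. b < m*n \<and> hold b = g} = n" by simp
  next
    fix c assume c: "c < n"
    define f where "f b = \<phi> (Some (cell b))" for b
    have finj: "inj_on f {..<m*n}"
    proof (rule inj_onI)
      fix a b assume a: "a \<in> {..<m*n}" and b: "b \<in> {..<m*n}" and e: "f a = f b"
      have "Some (cell a) \<in> rb_carrier m n" "Some (cell b) \<in> rb_carrier m n"
        using cell_in a b by (auto simp: rb_carrier_def)
      then have "Some (cell a) = Some (cell b)"
        using e phi_bij unfolding f_def bij_betw_def inj_on_def by blast
      then show "a = b" using cell_inj a b by (auto simp: inj_on_def)
    qed
    have img: "f ` {b. b < m*n \<and> col b = c} = (\<lambda>k. Some (k, c+1)) ` {1..m}"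
    proof (intro set_eqI iffI)
      fix y assume "y \<in> f ` {b. b < m*n \<and> col b = c}"
      then obtain b where b: "b < m*n" "col b = c" "y = f b" by auto
      then show "y \<in> (\<lambda>k. Some (k, c+1)) ` {1..m}" using colE[OF b(1)] by (auto simp: f_def)
    next
      fix y assume "y \<in> (\<lambda>k. Some (k, c+1)) ` {1..m}"
      then obtain k where k: "k \<in> {1..m}" "y = Some (k, c+1)" by auto
      then have "y \<in> rb_carrier m n" using c by (auto simp: rb_carrier_def)
      then obtain x where x: "x \<in> rb_carrier m n" "\<phi> x = y"
        using phi_bij unfolding bij_betw_def by (metis imageE)
      have "x \<noteq> None"
      proof
        assume "x = None"
        then have "y = None" using x(2) phiN by simp
        then show False using k(2) by simp
      qed
      then obtain i j where ij: "x = Some (i,j)" "i\<in>{1..m}" "j\<in>{1..n}" using x(1)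
        by (auto simp: rb_carrier_def)
      obtain b where b: "b < m*n" "cell b = (i,j)" using cell_surj ij by blast
      have fb: "f b = y" using b x ij by (simp add: f_def)
      obtain k' where "\<phi> (Some (cell b)) = Some (k', col b + 1)" using colE[OF b(1)] by blast
      then have "col b = c" using fb k unfolding f_def by simp
      then show "y \<in> f ` {b. b < m*n \<and> col b = c}" using b fb by blast
    qed
    have "card {b. b < m*n \<and> col b = c} = card (f ` {b. b < m*n \<and> col b = c})"
      by (rule card_image[symmetric]) (rule inj_on_subset[OF finj], auto)
    also have "\<dots> = m" unfolding img by (subst card_image) (auto simp: inj_on_def)
    finally show "card {b. b < m*n \<and> col b = c} = m" .
  qed
  obtain X where adm: "admissible_exchanges m n hold X"
    and sol: "\<forall>g<m. \<forall>c<n. \<exists>b<m*n. new_holder hold X b = g \<and> col b = c"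
    using CA m n valid unfolding colour_alignment_always_solvable_def colour_alignment_solvable_def
    by blast
  have disj: "\<forall>e\<in>X. \<forall>e'\<in>X. e \<noteq> e' \<longrightarrow> e \<inter> e' = {}"
    and shape: "\<forall>e \<in> X. \<exists>a b. e = {a, b} \<and> a < m * n \<and> b < m * n \<and> hold a \<noteq> hold b"
    using adm by (auto simp: admissible_exchanges_def)
  define s where "s b = (if \<exists>e\<in>X. b\<in>e then THE b'. {b,b'}\<in>X else b)" for b
  have nh: "new_holder hold X b = hold (s b)" for b
    by (simp add: new_holder_def s_def)
  have shape': "\<forall>e \<in> X. \<exists>a c. e = {a, c} \<and> a < m*n \<and> c < m*n"
    using shape by blast
  have s_props: "s b < m*n \<and> s (s b) = b" if b: "b < m*n" for b
    by (rule s_props[OF disj shape' s_def b])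
  define \<pi> where "\<pi> b = Some (hold (s b) + 1, col b + 1)" for b
  have pi_img: "\<pi> ` {..<m*n} = G"
  proof (intro set_eqI iffI)
    fix y assume "y \<in> \<pi> ` {..<m*n}"
    then obtain b where b: "b < m*n" "y = \<pi> b" by auto
    have "hold (s b) < m" using s_props[OF b(1)] by (simp add: hold_def less_mult_imp_div_less)
    moreover have "col b < n" using colE[OF b(1)] by blast
    ultimately show "y \<in> G" using b by (auto simp: G_def \<pi>_def)
  next
    fix y assume "y \<in> G"
    then obtain i j where ij: "y = Some (i,j)" "i\<in>{1..m}" "j\<in>{1..n}" by (auto simp: G_def)
    have "i - 1 < m" "j - 1 < n" using ij by auto
    then obtain b where b: "b < m*n" "new_holder hold X b = i - 1" "col b = j - 1"
      using sol by blast
    have "\<pi> b = y" using b ij by (auto simp: \<pi>_def nh)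
    then show "y \<in> \<pi> ` {..<m*n}" using b by auto
  qed
  have cardG: "card G = m*n" unfolding G_def by (subst card_image) (auto simp: inj_on_def)
  have pi_inj: "inj_on \<pi> {..<m*n}"
    by (rule eq_card_imp_inj_on) (auto simp: pi_img cardG)
  define \<psi> where "\<psi> y = (if y = None then None else \<pi> (s (inv_into {..<m*n} \<pi> y)))" for y
  have psi_pi: "\<psi> (\<pi> b) = \<pi> (s b)" if "b < m*n" for b
  proof -
    have "\<pi> b \<noteq> None" by (simp add: \<pi>_def)
    moreover have "inv_into {..<m*n} \<pi> (\<pi> b) = b" using that pi_inj by (simp add: inv_into_f_f)
    ultimately show ?thesis unfolding \<psi>_def[of "\<pi> b"] by (simp only: if_False)
  qed
  have pi_surj: "\<exists>b<m*n. y = \<pi> b" if "y \<in> G" for y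
    using that pi_img by auto
  have in_carr: "\<psi> y \<in> rb_carrier m n" if yc: "y \<in> rb_carrier m n" for y
  proof (cases "y = None")
    case True then show ?thesis by (simp add: \<psi>_def rb_carrier_def)
  next
    case False
    then obtain b where b: "b < m*n" "y = \<pi> b" using yc pi_surj carr by auto
    then show ?thesis using psi_pi s_props pi_img carr by auto
  qed
  have invol: "\<psi> (\<psi> y) = y" if yc: "y \<in> rb_carrier m n" for y
  proof (cases "y = None")
    case True then show ?thesis by (simp add: \<psi>_def)
  next
    case False
    then obtain b where b: "b < m*n" "y = \<pi> b" using yc pi_surj carr by auto
    then show ?thesis using psi_pi s_props by auto
  qed
  have isinv: "\<psi> y \<in> rb_inverses m n E y" if yc: "y \<in> rb_carrier m n" for y
  proof (cases "y = None")
    case True then show ?thesis by (simp add: \<psi>_def inv_none)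
  next
    case False
    then obtain b where b: "b < m*n" "y = \<pi> b" using yc pi_surj carr by auto
    have sb: "s b < m*n" "s (s b) = b" using s_props[OF b(1)] by auto
    have py: "\<psi> y = Some (hold b + 1, col (s b) + 1)"
      using b psi_pi sb by (simp add: \<pi>_def)
    have "hold b < m" using b(1) by (simp add: hold_def less_mult_imp_div_less)
    moreover have "col (s b) < n" "(hold (s b) + 1, col (s b) + 1) \<in> E" using colE[OF sb(1)] by auto
    moreover have "(hold b + 1, col b + 1) \<in> E" using colE[OF b(1)] by auto
    ultimately show ?thesis using py b(2) unfolding \<pi>_def by (simp add: inv_some)
  qed
  have "bij_betw \<psi> (rb_carrier m n) (rb_carrier m n)"
    by (rule bij_betw_byWitness[where f' = \<psi>]) (auto simp: in_carr invol)
  then have "involution_matching m n E \<psi>"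
    using isinv invol by (auto simp: involution_matching_def permutation_matching_def)
  then show ?thesis by blast
qed

theorem theorem2p4:
  assumes "colour_alignment_always_solvable"
  shows "\<forall>m n E. 0 < m \<longrightarrow> 0 < n \<longrightarrow> rb_valid m n E \<longrightarrow>
           (\<exists>\<phi>. permutation_matching m n E \<phi>) \<longrightarrow> (\<exists>\<psi>. involution_matching m n E \<psi>)"
  using main[OF assms] by blast

end
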